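(* Fix $s\in\mathbb N$ with $s\ge2$, positive integers $y_1,\dots,y_s$, and a polynomial $p\in\mathbb R[x_1,\dots,x_s]$ of degree $q$. For $\eta\in\mathbb N$ with $\eta\ge\sum_{i=1}^s y_i$ and distinct reals $w_1,\dots,w_s$, $$\sum_{\substack{x_1+\dots+x_s=\eta\\ x_i\ge y_i}} p(x_1,\dots,x_s)\,w_1^{x_1}\cdots w_s^{x_s}=\frac{\sum_{l=1}^s w_l^{\eta+2-\sum_{i=1}^s y_i}f_{l,\eta}(w_1,\dots,w_s)}{\left(\prod_{1\le i<j\le s}(w_i-w_j)\right)^{2^q}},$$ where each $f_{l,\eta}\in\mathbb R[\eta][w_1,\dots,w_s]$ is homogeneous in $w_1,\dots,w_s$ of degree $2^q\binom s2+\left(\sum_{i=1}^s y_i\right)-2$, and its coefficients are polynomials in $\eta$ of degree at most $q$.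
   Context: The sum runs over integer tuples $(x_1,\dots,x_s)$ with $x_i\ge y_i$ for all $i$. *)

theory Defs
  imports "HOL-Library.Poly_Mapping" "HOL-Computational_Algebra.Polynomial"
begin

(* Multivariate polynomials in variables x_0, x_1, ... are represented as finitely
   supported maps from exponent vectors (monomials, nat \<Rightarrow>\<^sub>0 nat) to coefficients. *)

definition mono_deg :: "(nat \<Rightarrow>\<^sub>0 nat) \<Rightarrow> nat" where
  "mono_deg \<alpha> = (\<Sum>i\<in>Poly_Mapping.keys \<alpha>. Poly_Mapping.lookup \<alpha> i)"

definition mono_eval :: "(nat \<Rightarrow>\<^sub>0 nat) \<Rightarrow> (nat \<Rightarrow> real) \<Rightarrow> real" where
  "mono_eval \<alpha> x = (\<Prod>i\<in>Poly_Mapping.keys \<alpha>. x i ^ Poly_Mapping.lookup \<alpha> i)"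

definition mpoly_eval :: "((nat \<Rightarrow>\<^sub>0 nat) \<Rightarrow>\<^sub>0 real) \<Rightarrow> (nat \<Rightarrow> real) \<Rightarrow> real" where
  "mpoly_eval p x = (\<Sum>\<alpha>\<in>Poly_Mapping.keys p. Poly_Mapping.lookup p \<alpha> * mono_eval \<alpha> x)"

definition vars_below :: "((nat \<Rightarrow>\<^sub>0 nat) \<Rightarrow>\<^sub>0 'a::zero) \<Rightarrow> nat \<Rightarrow> bool" where
  "vars_below p s \<longleftrightarrow> (\<forall>\<alpha>\<in>Poly_Mapping.keys p. Poly_Mapping.keys \<alpha> \<subseteq> {..<s})"

definition total_degree :: "((nat \<Rightarrow>\<^sub>0 nat) \<Rightarrow>\<^sub>0 'a::zero) \<Rightarrow> nat" where
  "total_degree p = Max (insert 0 (mono_deg ` Poly_Mapping.keys p))"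

(* polynomials in w_0,...,w_{s-1} whose coefficients are univariate polynomials in eta,
   i.e. elements of R[eta][w]; evaluation at a given eta and w *)
definition eta_mpoly_eval :: "((nat \<Rightarrow>\<^sub>0 nat) \<Rightarrow>\<^sub>0 real poly) \<Rightarrow> real \<Rightarrow> (nat \<Rightarrow> real) \<Rightarrow> real" where
  "eta_mpoly_eval f eta w = (\<Sum>\<alpha>\<in>Poly_Mapping.keys f. poly (Poly_Mapping.lookup f \<alpha>) eta * mono_eval \<alpha> w)"

definition homogeneous_of :: "((nat \<Rightarrow>\<^sub>0 nat) \<Rightarrow>\<^sub>0 'a::zero) \<Rightarrow> nat \<Rightarrow> bool" where
  "homogeneous_of f d \<longleftrightarrow> (\<forall>\<alpha>\<in>Poly_Mapping.keys f. mono_deg \<alpha> = d)"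

end

theory Submission
  imports Defs "HOL-Library.FuncSet"
begin


lemma mono_eval_superset:
  assumes "finite K" "Poly_Mapping.keys a \<subseteq> K"
  shows "mono_eval a x = (\<Prod>i\<in>K. x i ^ Poly_Mapping.lookup a i)"
  unfolding mono_eval_def
  by (rule prod.mono_neutral_left[OF assms(1,2)]) (auto simp: in_keys_iff)

lemma mono_deg_superset:
  assumes "finite K" "Poly_Mapping.keys a \<subseteq> K"
  shows "mono_deg a = (\<Sum>i\<in>K. Poly_Mapping.lookup a i)"
  unfolding mono_deg_def
  by (rule sum.mono_neutral_left[OF assms(1,2)]) (auto simp: in_keys_iff)

lemma mono_eval_add: "mono_eval (a + b) x = mono_eval a x * mono_eval b x"
proof -
  let ?K = "Poly_Mapping.keys a \<union> Poly_Mapping.keys b"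
  have "mono_eval (a + b) x = (\<Prod>i\<in>?K. x i ^ Poly_Mapping.lookup (a+b) i)"
    by (rule mono_eval_superset) (auto simp: keys_add)
  also have "\<dots> = (\<Prod>i\<in>?K. x i ^ Poly_Mapping.lookup a i) * (\<Prod>i\<in>?K. x i ^ Poly_Mapping.lookup b i)"
    by (simp add: lookup_add power_add prod.distrib)
  also have "\<dots> = mono_eval a x * mono_eval b x"
    by (subst (1 2) mono_eval_superset[of ?K]) auto
  finally show ?thesis .
qed

lemma mono_deg_add: "mono_deg (a + b) = mono_deg a + mono_deg b"
proof -
  let ?K = "Poly_Mapping.keys a \<union> Poly_Mapping.keys b"
  have "mono_deg (a + b) = (\<Sum>i\<in>?K. Poly_Mapping.lookup (a+b) i)"
    by (rule mono_deg_superset) (auto simp: keys_add)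
  also have "\<dots> = (\<Sum>i\<in>?K. Poly_Mapping.lookup a i) + (\<Sum>i\<in>?K. Poly_Mapping.lookup b i)"
    by (simp add: lookup_add sum.distrib)
  also have "\<dots> = mono_deg a + mono_deg b"
    by (subst (1 2) mono_deg_superset[of ?K]) auto
  finally show ?thesis .
qed

lemma mono_eval_zero[simp]: "mono_eval 0 x = 1"
  by (simp add: mono_eval_def)
lemma mono_deg_zero[simp]: "mono_deg 0 = 0"
  by (simp add: mono_deg_def)
lemma mono_eval_single[simp]: "mono_eval (Poly_Mapping.single i 1) x = x i"
  by (simp add: mono_eval_def)
lemma mono_deg_single[simp]: "mono_deg (Poly_Mapping.single i 1) = 1"
  by (simp add: mono_deg_def)

lemma mono_eval_single'[simp]: "mono_eval (Poly_Mapping.single i (Suc 0)) x = x i"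
  by (simp add: mono_eval_def)
lemma mono_deg_single'[simp]: "mono_deg (Poly_Mapping.single i (Suc 0)) = 1"
  by (simp add: mono_deg_def)

lemma eval_superset:
  assumes "finite K" "Poly_Mapping.keys f \<subseteq> K"
  shows "eta_mpoly_eval f t w = (\<Sum>a\<in>K. poly (Poly_Mapping.lookup f a) t * mono_eval a w)"
  unfolding eta_mpoly_eval_def
  by (rule sum.mono_neutral_left[OF assms(1,2)]) (auto simp: in_keys_iff)

lemma eval_add: "eta_mpoly_eval (f + g) t w = eta_mpoly_eval f t w + eta_mpoly_eval g t w"
proof -
  let ?K = "Poly_Mapping.keys f \<union> Poly_Mapping.keys g"
  have "eta_mpoly_eval (f + g) t w = (\<Sum>a\<in>?K. poly (Poly_Mapping.lookup (f+g) a) t * mono_eval a w)"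
    by (rule eval_superset) (auto simp: keys_add)
  also have "\<dots> = (\<Sum>a\<in>?K. poly (Poly_Mapping.lookup f a) t * mono_eval a w)
     + (\<Sum>a\<in>?K. poly (Poly_Mapping.lookup g a) t * mono_eval a w)"
    by (simp add: lookup_add sum.distrib distrib_right)
  also have "\<dots> = eta_mpoly_eval f t w + eta_mpoly_eval g t w"
    by (subst (1 2) eval_superset[of ?K]) auto
  finally show ?thesis .
qed

lemma eval_single: "eta_mpoly_eval (Poly_Mapping.single a c) t w = poly c t * mono_eval a w"
  by (simp add: eta_mpoly_eval_def)

lemma eval_zero: "eta_mpoly_eval 0 t w = 0"
  by (simp add: eta_mpoly_eval_def)

definition collect :: "(real poly \<times> (nat \<Rightarrow>\<^sub>0 nat)) list \<Rightarrow> ((nat \<Rightarrow>\<^sub>0 nat) \<Rightarrow>\<^sub>0 real poly)" where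
  "collect L = (\<Sum>(c,a)\<leftarrow>L. Poly_Mapping.single a c)"

lemma collect_keys: "Poly_Mapping.keys (collect L) \<subseteq> snd ` set L"
proof (induction L)
  case Nil then show ?case by (simp add: collect_def)
next
  case (Cons p L)
  obtain c a where p: "p = (c,a)" by (cases p)
  have "collect (p # L) = Poly_Mapping.single a c + collect L" by (simp add: collect_def p)
  then show ?case using Cons keys_add[of "Poly_Mapping.single a c" "collect L"] by (auto simp: p split: if_splits)
qed

lemma collect_eval: "eta_mpoly_eval (collect L) t w = (\<Sum>(c,a)\<leftarrow>L. poly c t * mono_eval a w)"
proof (induction L)
  case Nil then show ?case by (simp add: collect_def eval_zero)
next
  case (Cons p L)
  obtain c a where p: "p = (c,a)" by (cases p)
  have "collect (p # L) = Poly_Mapping.single a c + collect L" by (simp add: collect_def p)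
  then show ?case using Cons by (simp add: eval_add eval_single p)
qed

lemma collect_degree:
  assumes "\<forall>(c,a)\<in>set L. degree c \<le> e"
  shows "degree (Poly_Mapping.lookup (collect L) b) \<le> e"
  using assms
proof (induction L)
  case Nil then show ?case by (simp add: collect_def)
next
  case (Cons p L)
  obtain c a where p: "p = (c,a)" by (cases p)
  have "collect (p # L) = Poly_Mapping.single a c + collect L" by (simp add: collect_def p)
  then have "Poly_Mapping.lookup (collect (p # L)) b = (c when a = b) + Poly_Mapping.lookup (collect L) b"
    by (simp add: lookup_add lookup_single)
  then show ?case using Cons p
    by (auto simp: when_def intro!: degree_add_le)
qed



definition Dp :: "nat set \<Rightarrow> (nat \<Rightarrow> nat) \<Rightarrow> (nat \<Rightarrow> real) \<Rightarrow> nat \<Rightarrow> real" where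
  "Dp K a w k = real (a k) * w k ^ (a k - 1) * (\<Prod>i\<in>K-{k}. w i ^ a i)"

lemma prod_pow_deriv:
  assumes "finite K" "k \<in> K"
  shows "((\<lambda>u. \<Prod>i\<in>K. (w(k:=u)) i ^ a i) has_real_derivative Dp K a w k) (at (w k))"
    and "w k * Dp K a w k = real (a k) * (\<Prod>i\<in>K. w i ^ a i)"
proof -
  have eq: "(\<Prod>i\<in>K. (w(k:=u)) i ^ a i) = u ^ a k * (\<Prod>i\<in>K-{k}. w i ^ a i)" for u
    using assms by (simp add: prod.remove)
  show "((\<lambda>u. \<Prod>i\<in>K. (w(k:=u)) i ^ a i) has_real_derivative Dp K a w k) (at (w k))"
    unfolding eq Dp_def
    by (auto intro!: derivative_eq_intros)
  show "w k * Dp K a w k = real (a k) * (\<Prod>i\<in>K. w i ^ a i)"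
  proof (cases "a k")
    case 0 then show ?thesis by (simp add: Dp_def)
  next
    case (Suc n)
    then show ?thesis using assms by (simp add: Dp_def prod.remove)
  qed
qed

definition Dm :: "(nat \<Rightarrow>\<^sub>0 nat) \<Rightarrow> (nat \<Rightarrow> real) \<Rightarrow> nat \<Rightarrow> real" where
  "Dm a w k = Dp (Poly_Mapping.keys a \<union> {k}) (Poly_Mapping.lookup a) w k"

lemma mono_eval_deriv:
  shows "((\<lambda>u. mono_eval a (w(k:=u))) has_real_derivative Dm a w k) (at (w k))"
    and "w k * Dm a w k = real (Poly_Mapping.lookup a k) * mono_eval a w"
proof -
  let ?K = "Poly_Mapping.keys a \<union> {k}"
  have eq: "mono_eval a v = (\<Prod>i\<in>?K. v i ^ Poly_Mapping.lookup a i)" for v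
    by (rule mono_eval_superset) auto
  show "((\<lambda>u. mono_eval a (w(k:=u))) has_real_derivative Dm a w k) (at (w k))"
    unfolding eq Dm_def by (rule prod_pow_deriv) auto
  show "w k * Dm a w k = real (Poly_Mapping.lookup a k) * mono_eval a w"
    unfolding eq Dm_def by (rule prod_pow_deriv) auto
qed

lemma sum_list_pairs:
  "(\<Sum>(c,a)\<leftarrow>concat (map (\<lambda>(c,a). map (\<lambda>(c',b). (c*c',a+b)) M) L). poly c t * mono_eval a w)
   = (\<Sum>(c,a)\<leftarrow>L. poly c t * mono_eval a w) * (\<Sum>(c,a)\<leftarrow>M. poly c t * mono_eval a w)"
proof (induction L)
  case Nil then show ?case by simp
next
  case (Cons p L)
  obtain c a where p: "p = (c,a)" by (cases p)
  have "(\<Sum>(c',b)\<leftarrow>M. poly (c*c') t * mono_eval (a+b) w)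
      = (\<Sum>(c',b)\<leftarrow>M. (poly c t * mono_eval a w) * (poly c' t * mono_eval b w))"
    by (rule arg_cong[where f=sum_list], rule map_cong) (auto simp: mono_eval_add)
  also have "\<dots> = (poly c t * mono_eval a w) * (\<Sum>(c',b)\<leftarrow>M. poly c' t * mono_eval b w)"
    by (induction M) (auto simp: algebra_simps)
  finally have h: "(\<Sum>(c',b)\<leftarrow>M. poly (c*c') t * mono_eval (a+b) w) = \<dots>" .
  show ?case using Cons h by (simp add: p o_def case_prod_unfold distrib_right)
qed

locale lset =
  fixes s :: nat and y :: "nat \<Rightarrow> nat"
  assumes s2: "2 \<le> s" and y1: "\<forall>i<s. 1 \<le> y i"
begin

definition Rep :: "nat \<Rightarrow> nat \<Rightarrow> (real \<Rightarrow> (nat \<Rightarrow> real) \<Rightarrow> real) \<Rightarrow> bool" where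
  "Rep d e \<Phi> \<longleftrightarrow> (\<exists>L. (\<forall>(c,a)\<in>set L. Poly_Mapping.keys a \<subseteq> {..<s} \<and> mono_deg a = d \<and> degree c \<le> e)
      \<and> (\<forall>t w. \<Phi> t w = (\<Sum>(c,a)\<leftarrow>L. poly c t * mono_eval a w)))"

lemma Rep_zero: "Rep d e (\<lambda>t w. 0)"
  unfolding Rep_def by (rule exI[of _ "[]"]) simp

lemma Rep_cong: "Rep d e \<Phi> \<Longrightarrow> (\<And>t w. \<Phi> t w = \<Psi> t w) \<Longrightarrow> Rep d e \<Psi>"
  unfolding Rep_def
  apply (elim exE conjE)
  subgoal for L by (rule exI[of _ L]) auto
  done

lemma Rep_mono: "Rep d e \<Phi> \<Longrightarrow> e \<le> e' \<Longrightarrow> Rep d e' \<Phi>"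
  unfolding Rep_def
  apply (elim exE conjE)
  subgoal for L by (rule exI[of _ L]) auto
  done

lemma Rep_add: "Rep d e \<Phi> \<Longrightarrow> Rep d e \<Psi> \<Longrightarrow> Rep d e (\<lambda>t w. \<Phi> t w + \<Psi> t w)"
  unfolding Rep_def
  apply (elim exE conjE)
  subgoal for L M by (rule exI[of _ "L @ M"]) auto
  done

lemma Rep_const: "Rep 0 (degree c) (\<lambda>t w. poly c t)"
  unfolding Rep_def by (rule exI[of _ "[(c,0)]"]) simp

lemma Rep_var: "i < s \<Longrightarrow> Rep 1 0 (\<lambda>t w. w i)"
  unfolding Rep_def by (rule exI[of _ "[(1,Poly_Mapping.single i 1)]"]) simp

lemma Rep_mult:
  assumes "Rep d e \<Phi>" "Rep d' e' \<Psi>"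
  shows "Rep (d+d') (e+e') (\<lambda>t w. \<Phi> t w * \<Psi> t w)"
proof -
  obtain L where L: "\<forall>(c,a)\<in>set L. Poly_Mapping.keys a \<subseteq> {..<s} \<and> mono_deg a = d \<and> degree c \<le> e"
    "\<forall>t w. \<Phi> t w = (\<Sum>(c,a)\<leftarrow>L. poly c t * mono_eval a w)"
    using assms(1) unfolding Rep_def by blast
  obtain M where M: "\<forall>(c,a)\<in>set M. Poly_Mapping.keys a \<subseteq> {..<s} \<and> mono_deg a = d' \<and> degree c \<le> e'"
    "\<forall>t w. \<Psi> t w = (\<Sum>(c,a)\<leftarrow>M. poly c t * mono_eval a w)"
    using assms(2) unfolding Rep_def by blast
  show ?thesis
    unfolding Rep_def
  proof (intro exI conjI)
    show "\<forall>(c,a)\<in>set (concat (map (\<lambda>(c,a). map (\<lambda>(c',b). (c*c',a+b)) M) L)).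
        Poly_Mapping.keys a \<subseteq> {..<s} \<and> mono_deg a = d+d' \<and> degree c \<le> e+e'"
    proof (clarsimp)
      fix c a c' b assume "(c,a) \<in> set L" "(c',b) \<in> set M"
      then have h: "Poly_Mapping.keys a \<subseteq> {..<s}" "mono_deg a = d" "degree c \<le> e"
        "Poly_Mapping.keys b \<subseteq> {..<s}" "mono_deg b = d'" "degree c' \<le> e'" using L M by auto
      show "Poly_Mapping.keys (a + b) \<subseteq> {..<s} \<and> mono_deg (a + b) = d + d' \<and> degree (c * c') \<le> e + e'"
        using h keys_add[of a b] degree_mult_le[of c c'] by (auto simp: mono_deg_add)
    qed
    show "\<forall>t w. \<Phi> t w * \<Psi> t w = (\<Sum>(c,a)\<leftarrow>concat (map (\<lambda>(c,a). map (\<lambda>(c',b). (c*c',a+b)) M) L). poly c t * mono_eval a w)"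
      using L(2) M(2) by (simp add: sum_list_pairs)
  qed
qed

lemma Rep_scale: "Rep d e \<Phi> \<Longrightarrow> Rep d e (\<lambda>t w. r * \<Phi> t w)"
  using Rep_mult[OF Rep_const[of "[:r:]"]] by simp

lemma Rep_diff: "Rep d e \<Phi> \<Longrightarrow> Rep d e \<Psi> \<Longrightarrow> Rep d e (\<lambda>t w. \<Phi> t w - \<Psi> t w)"
  using Rep_add[of d e \<Phi> "\<lambda>t w. (-1) * \<Psi> t w"] Rep_scale[of d e \<Psi> "-1"] by simp

lemma Rep_one: "Rep 0 0 (\<lambda>t w. 1)"
  using Rep_const[of 1] by simp

lemma Rep_sum: "finite I \<Longrightarrow> (\<And>i. i \<in> I \<Longrightarrow> Rep d e (\<Phi> i)) \<Longrightarrow> Rep d e (\<lambda>t w. \<Sum>i\<in>I. \<Phi> i t w)"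
proof (induction I rule: finite_induct)
  case empty then show ?case by (simp add: Rep_zero)
next
  case (insert x F)
  then show ?case using Rep_add[of d e "\<Phi> x" "\<lambda>t w. \<Sum>i\<in>F. \<Phi> i t w"] by simp
qed

lemma Rep_prod: "finite I \<Longrightarrow> (\<And>i. i \<in> I \<Longrightarrow> Rep (d i) (e i) (\<Phi> i))
   \<Longrightarrow> Rep (\<Sum>i\<in>I. d i) (\<Sum>i\<in>I. e i) (\<lambda>t w. \<Prod>i\<in>I. \<Phi> i t w)"
proof (induction I rule: finite_induct)
  case empty then show ?case by (simp add: Rep_one)
next
  case (insert x F)
  then show ?case using Rep_mult[of "d x" "e x" "\<Phi> x" "\<Sum>i\<in>F. d i" "\<Sum>i\<in>F. e i" "\<lambda>t w. \<Prod>i\<in>F. \<Phi> i t w"] by simp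
qed

lemma Rep_pow: "Rep d e \<Phi> \<Longrightarrow> Rep (n*d) (n*e) (\<lambda>t w. \<Phi> t w ^ n)"
proof (induction n)
  case 0 then show ?case by (simp add: Rep_one)
next
  case (Suc n)
  then show ?case using Rep_mult[of d e \<Phi> "n*d" "n*e" "\<lambda>t w. \<Phi> t w ^ n"] by (simp add: add.commute)
qed

lemma Rep_deriv:
  assumes "Rep d e \<Phi>"
  shows "\<exists>\<Psi> \<Phi>'. Rep d e \<Psi> \<and> (\<forall>t w. ((\<lambda>u. \<Phi> t (w(k:=u))) has_real_derivative \<Phi>' t w) (at (w k))
          \<and> w k * \<Phi>' t w = \<Psi> t w)"
proof -
  obtain L where L: "\<forall>(c,a)\<in>set L. Poly_Mapping.keys a \<subseteq> {..<s} \<and> mono_deg a = d \<and> degree c \<le> e"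
    "\<forall>t w. \<Phi> t w = (\<Sum>(c,a)\<leftarrow>L. poly c t * mono_eval a w)"
    using assms(1) unfolding Rep_def by blast
  define M where "M = map (\<lambda>(c,a). (smult (real (Poly_Mapping.lookup a k)) c, a)) L"
  have "Rep d e (\<lambda>t w. \<Sum>(c,a)\<leftarrow>M. poly c t * mono_eval a w)"
    unfolding Rep_def
  proof (intro exI[of _ M] conjI allI)
    show "\<forall>(c,a)\<in>set M. Poly_Mapping.keys a \<subseteq> {..<s} \<and> mono_deg a = d \<and> degree c \<le> e"
      using L(1) unfolding M_def by (auto intro!: le_trans[OF degree_smult_le])
  qed simp
  moreover have "\<forall>t w. ((\<lambda>u. \<Phi> t (w(k:=u))) has_real_derivative (\<Sum>(c,a)\<leftarrow>L. poly c t * Dm a w k)) (at (w k))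
          \<and> w k * (\<Sum>(c,a)\<leftarrow>L. poly c t * Dm a w k) = (\<Sum>(c,a)\<leftarrow>M. poly c t * mono_eval a w)"
  proof (intro allI conjI)
    fix t w
    have "((\<lambda>u. \<Sum>(c,a)\<leftarrow>L. poly c t * mono_eval a (w(k:=u))) has_real_derivative (\<Sum>(c,a)\<leftarrow>L. poly c t * Dm a w k)) (at (w k))"
    proof (induction L)
      case Nil then show ?case by simp
    next
      case (Cons p L)
      obtain c a where p: "p = (c,a)" by (cases p)
      have "((\<lambda>u. poly c t * mono_eval a (w(k:=u)) + (\<Sum>(c,a)\<leftarrow>L. poly c t * mono_eval a (w(k:=u)))) has_real_derivative (poly c t * Dm a w k + (\<Sum>(c,a)\<leftarrow>L. poly c t * Dm a w k))) (at (w k))"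
        by (rule DERIV_add[OF DERIV_cmult[OF mono_eval_deriv(1)[of a w k]] Cons])
      then show ?case by (simp add: p fun_upd_def)
    qed
    then show "((\<lambda>u. \<Phi> t (w(k:=u))) has_real_derivative (\<Sum>(c,a)\<leftarrow>L. poly c t * Dm a w k)) (at (w k))"
      using L(2) by simp
    show "w k * (\<Sum>(c,a)\<leftarrow>L. poly c t * Dm a w k) = (\<Sum>(c,a)\<leftarrow>M. poly c t * mono_eval a w)"
      unfolding M_def
    proof (induction L)
      case Nil then show ?case by simp
    next
      case (Cons p L)
      obtain c a where p: "p = (c,a)" by (cases p)
      have "w k * (poly c t * Dm a w k) = poly c t * (w k * Dm a w k)" by simp
      then show ?case using Cons by (simp add: p distrib_left mono_eval_deriv(2))
    qed
  qed
  ultimately show ?thesis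
    by (intro exI[of _ "\<lambda>t w. \<Sum>(c,a)\<leftarrow>M. poly c t * mono_eval a w"]
              exI[of _ "\<lambda>t w. \<Sum>(c,a)\<leftarrow>L. poly c t * Dm a w k"]) simp
qed

end


definition Zs :: "nat set \<Rightarrow> nat \<Rightarrow> (nat \<Rightarrow> nat) set" where
  "Zs A m = {z. (\<forall>i. i \<notin> A \<longrightarrow> z i = 0) \<and> (\<Sum>i\<in>A. z i) = m}"

lemma finite_Zs:
  assumes "finite A"
  shows "finite (Zs A m)"
proof -
  have "Zs A m \<subseteq> (\<lambda>f i. if i \<in> A then f i else 0) ` (A \<rightarrow>\<^sub>E {..m})"
  proof
    fix z assume z: "z \<in> Zs A m"
    have le: "z i \<le> m" if "i \<in> A" for i
      using z member_le_sum[of i A z] that assms unfolding Zs_def by auto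
    have "z = (\<lambda>i. if i \<in> A then restrict z A i else 0)"
      using z unfolding Zs_def by auto
    moreover have "restrict z A \<in> A \<rightarrow>\<^sub>E {..m}" using le by auto
    ultimately show "z \<in> (\<lambda>f i. if i \<in> A then f i else 0) ` (A \<rightarrow>\<^sub>E {..m})" by blast
  qed
  moreover have "finite (A \<rightarrow>\<^sub>E {..m})" using assms by (simp add: finite_PiE)
  ultimately show ?thesis using finite_subset by blast
qed

definition Hs :: "nat set \<Rightarrow> nat \<Rightarrow> (nat \<Rightarrow> real) \<Rightarrow> real" where
  "Hs A m w = (\<Sum>z\<in>Zs A m. \<Prod>i\<in>A. w i ^ z i)"

lemma Zs_0: "finite A \<Longrightarrow> Zs A 0 = {\<lambda>_. 0}"
  unfolding Zs_def by (auto simp: fun_eq_iff)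

lemma Hs_0: "finite A \<Longrightarrow> Hs A 0 w = 1"
  by (simp add: Hs_def Zs_0)

lemma Hs_empty_Suc: "Hs {} (Suc m) w = 0"
  by (simp add: Hs_def Zs_def)

lemma sum_upd: "finite A \<Longrightarrow> b \<in> A \<Longrightarrow> (\<Sum>i\<in>A. (z(b:=v)) i) = v + (\<Sum>i\<in>A-{b}. z i)"
  by (simp add: sum.remove)

lemma prod_upd: "finite A \<Longrightarrow> b \<in> A \<Longrightarrow> (\<Prod>i\<in>A. w i ^ (z(b:=v)) i) = w b ^ v * (\<Prod>i\<in>A-{b}. w i ^ z i)"
  by (simp add: prod.remove)

lemma Hs_rec:
  assumes A: "finite A" and b: "b \<in> A"
  shows "Hs A (Suc m) w = Hs (A-{b}) (Suc m) w + w b * Hs A m w"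
proof -
  let ?Z0 = "{z\<in>Zs A (Suc m). z b = 0}" and ?Z1 = "{z\<in>Zs A (Suc m). z b \<noteq> 0}"
  have fin: "finite (Zs A (Suc m))" using finite_Zs[OF A] .
  have split: "Hs A (Suc m) w = (\<Sum>z\<in>?Z0. \<Prod>i\<in>A. w i ^ z i) + (\<Sum>z\<in>?Z1. \<Prod>i\<in>A. w i ^ z i)"
  proof -
    have "Hs A (Suc m) w = (\<Sum>z\<in>?Z0 \<union> ?Z1. \<Prod>i\<in>A. w i ^ z i)"
      unfolding Hs_def by (rule sum.cong) auto
    also have "\<dots> = (\<Sum>z\<in>?Z0. \<Prod>i\<in>A. w i ^ z i) + (\<Sum>z\<in>?Z1. \<Prod>i\<in>A. w i ^ z i)"
      by (rule sum.union_disjoint) (use fin in auto)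
    finally show ?thesis .
  qed
  have Z0: "?Z0 = Zs (A-{b}) (Suc m)"
  proof (intro set_eqI iffI)
    fix z assume "z \<in> ?Z0"
    then show "z \<in> Zs (A-{b}) (Suc m)" using A b by (auto simp: Zs_def sum.remove)
  next
    fix z assume z: "z \<in> Zs (A-{b}) (Suc m)"
    then have "z b = 0" by (auto simp: Zs_def)
    then show "z \<in> ?Z0" using z A b by (auto simp: Zs_def sum.remove)
  qed
  have P0: "(\<Sum>z\<in>?Z0. \<Prod>i\<in>A. w i ^ z i) = Hs (A-{b}) (Suc m) w"
    unfolding Z0 Hs_def
  proof (rule sum.cong)
    fix z assume "z \<in> Zs (A-{b}) (Suc m)"
    then have "z b = 0" by (auto simp: Zs_def)
    then show "(\<Prod>i\<in>A. w i ^ z i) = (\<Prod>i\<in>A-{b}. w i ^ z i)" by (simp add: prod.remove[OF A b])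
  qed simp
  have P1: "(\<Sum>z\<in>?Z1. \<Prod>i\<in>A. w i ^ z i) = w b * Hs A m w"
    unfolding Hs_def sum_distrib_left
  proof (rule sum.reindex_bij_witness[symmetric, where j="\<lambda>z. z(b := Suc (z b))" and i="\<lambda>z. z(b := z b - 1)"])
    fix z assume z: "z \<in> Zs A m"
    show "(z(b := Suc (z b)))(b := (z(b := Suc (z b))) b - 1) = z" by auto
    show "z(b := Suc (z b)) \<in> ?Z1"
      using z A b by (auto simp: Zs_def sum_upd sum.remove)
    show "(\<Prod>i\<in>A. w i ^ (z(b := Suc (z b))) i) = w b * (\<Prod>i\<in>A. w i ^ z i)"
      using A b by (simp add: prod_upd prod.remove)
  next
    fix z assume z: "z \<in> ?Z1"
    show "(z(b := z b - 1))(b := Suc ((z(b := z b - 1)) b)) = z" using z by auto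
    show "z(b := z b - 1) \<in> Zs A m"
    proof -
      have "(\<Sum>i\<in>A. (z(b := z b - 1)) i) = z b - 1 + (\<Sum>i\<in>A-{b}. z i)" using A b by (rule sum_upd)
      moreover have "(\<Sum>i\<in>A. z i) = z b + (\<Sum>i\<in>A-{b}. z i)" using A b by (simp add: sum.remove)
      ultimately show ?thesis using z b by (auto simp: Zs_def)
    qed
  qed
  show ?thesis using split P0 P1 by simp
qed

definition Ds :: "nat set \<Rightarrow> nat \<Rightarrow> (nat \<Rightarrow> real) \<Rightarrow> real" where
  "Ds A k w = (\<Sum>l\<in>A. w l ^ k / (\<Prod>i\<in>A-{l}. (w l - w i)))"

lemma Ds_rec:
  assumes A: "finite A" and b: "b \<in> A" and inj: "inj_on w A"
  shows "Ds A (Suc k) w = Ds (A-{b}) k w + w b * Ds A k w"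
proof -
  have "Ds A (Suc k) w - w b * Ds A k w = (\<Sum>l\<in>A. w l ^ k * (w l - w b) / (\<Prod>i\<in>A-{l}. (w l - w i)))"
    unfolding Ds_def sum_distrib_left sum_subtractf[symmetric]
    by (rule sum.cong) (auto simp: diff_divide_distrib right_diff_distrib mult.commute)
  also have "\<dots> = (\<Sum>l\<in>A-{b}. w l ^ k * (w l - w b) / (\<Prod>i\<in>A-{l}. (w l - w i)))"
    using A b by (simp add: sum.remove)
  also have "\<dots> = Ds (A-{b}) k w"
    unfolding Ds_def
  proof (rule sum.cong)
    fix l assume l: "l \<in> A - {b}"
    have ne: "w l - w b \<noteq> 0" using inj l b by (auto dest: inj_onD)
    have "(\<Prod>i\<in>A-{l}. (w l - w i)) = (w l - w b) * (\<Prod>i\<in>(A-{l})-{b}. (w l - w i))"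
      using A b l by (subst prod.remove[of _ b]) auto
    moreover have "(A-{l})-{b} = (A-{b})-{l}" by auto
    ultimately show "w l ^ k * (w l - w b) / (\<Prod>i\<in>A-{l}. (w l - w i)) = w l ^ k / (\<Prod>i\<in>A-{b}-{l}. (w l - w i))"
      using ne by simp
  qed simp
  finally show ?thesis by simp
qed

definition Gs :: "nat set \<Rightarrow> nat \<Rightarrow> (nat \<Rightarrow> real) \<Rightarrow> real" where
  "Gs A k w = (if card A \<le> Suc k then Hs A (Suc k - card A) w else 0)"

lemma Gs_rec:
  assumes A: "finite A" and b: "b \<in> A"
  shows "Gs A (Suc k) w = Gs (A-{b}) k w + w b * Gs A k w"
proof -
  have cA: "card (A-{b}) = card A - 1" using A b by simp
  have c1: "card A \<ge> 1" using A b by (metis One_nat_def Suc_leI card_gt_0_iff empty_iff)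
  consider "Suc (Suc k) < card A" | "card A = Suc (Suc k)" | "card A \<le> Suc k" by linarith
  then show ?thesis
  proof cases
    case 1 then show ?thesis unfolding Gs_def cA by auto
  next
    case 2 then show ?thesis unfolding Gs_def cA using A by (simp add: Hs_0)
  next
    case 3
    have "Suc (Suc k) - card A = Suc (Suc k - card A)" using 3 by simp
    then have "Hs A (Suc (Suc k) - card A) w = Hs (A-{b}) (Suc (Suc k - card A)) w + w b * Hs A (Suc k - card A) w"
      using Hs_rec[OF A b] by simp
    moreover have "Suc k - (card A - 1) = Suc (Suc k - card A)" using 3 c1 by simp
    ultimately show ?thesis unfolding Gs_def cA using 3 by simp
  qed
qed

lemma Ds_eq_Gs:
  "finite A \<Longrightarrow> inj_on w A \<Longrightarrow> Ds A k w = Gs A k w"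
proof (induction "card A" arbitrary: A k rule: less_induct)
  case less
  note A = less.prems(1) and inj = less.prems(2)
  have IH: "\<And>B k. B \<subset> A \<Longrightarrow> Ds B k w = Gs B k w"
    using less.hyps A inj by (meson finite_subset inj_on_subset psubset_card_mono psubset_imp_subset)
  show ?case
  proof (cases "A = {}")
    case True then show ?thesis by (simp add: Ds_def Gs_def Hs_empty_Suc)
  next
    case False
    then obtain b where b: "b \<in> A" by blast
    have base: "Ds A 0 w = Gs A 0 w"
    proof (cases "card A = 1")
      case True
      then obtain a where "A = {a}" using card_1_singletonE by blast
      then show ?thesis by (simp add: Ds_def Gs_def Hs_0)
    next
      case False
      with A \<open>A \<noteq> {}\<close> have "card A \<ge> 2"
        by (metis One_nat_def Suc_1 Suc_leI card_gt_0_iff le_neq_implies_less not_less_eq_eq)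
      then obtain a where a: "a \<in> A" "a \<noteq> b"
        using b by (metis card_1_singletonE card_le_Suc0_iff_eq not_less_eq_eq numeral_2_eq_2 A One_nat_def)
      have e1: "Ds A 1 w = Ds (A-{b}) 0 w + w b * Ds A 0 w" using Ds_rec[OF A b inj, of 0] by simp
      have e2: "Ds A 1 w = Ds (A-{a}) 0 w + w a * Ds A 0 w" using Ds_rec[OF A a(1) inj, of 0] by simp
      have "Ds (A-{b}) 0 w = Gs (A-{b}) 0 w" by (rule IH) (use b in auto)
      also have "\<dots> = Gs (A-{a}) 0 w" using A a b \<open>card A \<ge> 2\<close> by (simp add: Gs_def Hs_0)
      also have "\<dots> = Ds (A-{a}) 0 w" by (rule IH[symmetric]) (use a in auto)
      finally have "(w b - w a) * Ds A 0 w = 0" using e1 e2 by (simp add: algebra_simps)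
      moreover have "w b \<noteq> w a" using inj a b by (auto dest: inj_onD)
      ultimately have "Ds A 0 w = 0" by simp
      then show ?thesis using \<open>card A \<ge> 2\<close> by (simp add: Gs_def)
    qed
    show ?thesis
    proof (induction k)
      case 0 then show ?case by (rule base)
    next
      case (Suc k)
      have "Ds A (Suc k) w = Ds (A-{b}) k w + w b * Ds A k w" by (rule Ds_rec[OF A b inj])
      also have "\<dots> = Gs (A-{b}) k w + w b * Gs A k w" using IH[of "A-{b}" k] b Suc by auto
      also have "\<dots> = Gs A (Suc k) w" by (rule Gs_rec[OF A b, symmetric])
      finally show ?case .
    qed
  qed
qed



lemma card_pairs: "card {(i,j). i < j \<and> j < (n::nat)} = n choose 2"
proof (induction n)
  case 0 then show ?case by simp
next
  case (Suc n)
  have eq: "{(i,j). i < j \<and> j < Suc n} = {(i,j). i < j \<and> j < n} \<union> (\<lambda>i. (i,n)) ` {..<n}"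
    by auto
  have fin: "finite {(i,j). i < j \<and> j < (n::nat)}"
    by (rule finite_subset[of _ "{..<n} \<times> {..<n}"]) auto
  have "card {(i,j). i < j \<and> j < Suc n} = card {(i,j). i < j \<and> j < n} + card ((\<lambda>i. (i,n)) ` {..<n})"
    unfolding eq by (rule card_Un_disjoint) (use fin in auto)
  also have "card ((\<lambda>i. (i,n)) ` {..<n}) = n" by (subst card_image) (auto simp: inj_on_def)
  finally show ?case using Suc by (simp add: numeral_2_eq_2)
qed

context lset
begin

lemma Rep_var': "i < s \<Longrightarrow> Rep (Suc 0) 0 (\<lambda>t w. w i)"
  using Rep_var by simp

definition "Y = (\<Sum>i<s. y i)"

definition Cset :: "nat \<Rightarrow> (nat \<Rightarrow> nat) set" where
  "Cset eta = {x. (\<forall>i<s. y i \<le> x i) \<and> (\<forall>i\<ge>s. x i = 0) \<and> (\<Sum>i<s. x i) = eta}"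

definition S :: "((nat \<Rightarrow> nat) \<Rightarrow> real) \<Rightarrow> nat \<Rightarrow> (nat \<Rightarrow> real) \<Rightarrow> real" where
  "S g eta w = (\<Sum>x\<in>Cset eta. g x * (\<Prod>i<s. w i ^ x i))"

definition "PP = {(i,j). i < j \<and> j < s}"

definition V :: "(nat \<Rightarrow> real) \<Rightarrow> real" where
  "V w = (\<Prod>(i,j)\<in>PP. (w i - w j))"

definition "PPl l = {(i,j). i < j \<and> j < s \<and> i \<noteq> l \<and> j \<noteq> l}"

definition Vl :: "nat \<Rightarrow> (nat \<Rightarrow> real) \<Rightarrow> real" where
  "Vl l w = (\<Prod>(i,j)\<in>PPl l. (w i - w j))"

lemma Y_ge: "s \<le> Y"
proof -
  have "(\<Sum>i<s. 1) \<le> (\<Sum>i<s. y i)" using y1 by (intro sum_mono) auto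
  then show ?thesis by (simp add: Y_def)
qed

lemma Y2: "2 \<le> Y" using Y_ge s2 by simp

lemma finite_PP: "finite PP"
  unfolding PP_def by (rule finite_subset[of _ "{..<s} \<times> {..<s}"]) auto

lemma finite_PPl: "finite (PPl l)"
  unfolding PPl_def by (rule finite_subset[of _ "{..<s} \<times> {..<s}"]) auto

lemma S_one:
  assumes "Y \<le> eta"
  shows "S (\<lambda>_. 1) eta w = (\<Prod>i<s. w i ^ y i) * Hs {..<s} (eta - Y) w"
proof -
  have "S (\<lambda>_. 1) eta w = (\<Sum>x\<in>Cset eta. \<Prod>i<s. w i ^ x i)" by (simp add: S_def)
  also have "\<dots> = (\<Sum>z\<in>Zs {..<s} (eta - Y). (\<Prod>i<s. w i ^ y i) * (\<Prod>i<s. w i ^ z i))"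
  proof (rule sum.reindex_bij_witness[symmetric, where j="\<lambda>z i. if i < s then z i + y i else 0"
        and i="\<lambda>x i. x i - y i"])
    fix z assume z: "z \<in> Zs {..<s} (eta - Y)"
    show "(\<lambda>i. (if i < s then z i + y i else 0) - y i) = z" using z by (auto simp: Zs_def fun_eq_iff)
    show "(\<lambda>i. if i < s then z i + y i else 0) \<in> Cset eta"
      using z assms by (auto simp: Zs_def Cset_def sum.distrib Y_def)
    show "(\<Prod>i<s. w i ^ (if i < s then z i + y i else 0)) = (\<Prod>i<s. w i ^ y i) * (\<Prod>i<s. w i ^ z i)"
      by (simp add: power_add prod.distrib mult.commute)
  next
    fix x assume x: "x \<in> Cset eta"
    show "(\<lambda>i. if i < s then x i - y i + y i else 0) = x" using x by (auto simp: Cset_def fun_eq_iff)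
    have "(\<Sum>i<s. x i - y i) = (\<Sum>i<s. x i) - (\<Sum>i<s. y i)"
      using x by (intro sum_subtractf_nat) (auto simp: Cset_def)
    then show "(\<lambda>i. x i - y i) \<in> Zs {..<s} (eta - Y)" using x by (auto simp: Zs_def Cset_def Y_def)
  qed
  also have "\<dots> = (\<Prod>i<s. w i ^ y i) * Hs {..<s} (eta - Y) w"
    by (simp add: Hs_def sum_distrib_left)
  finally show ?thesis .
qed

lemma V_split:
  assumes l: "l < s"
  shows "V w = (-1) ^ l * Vl l w * (\<Prod>i\<in>{..<s}-{l}. (w l - w i))"
    and "card PP = card (PPl l) + (s - 1)"
proof -
  define Pa where "Pa = (\<lambda>i. (i,l)) ` {..<l}"
  define Pb where "Pb = (\<lambda>j. (l,j)) ` {l<..<s}"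
  have PPeq: "PP = PPl l \<union> (Pa \<union> Pb)"
    unfolding PP_def PPl_def Pa_def Pb_def using l by auto
  have d1: "PPl l \<inter> (Pa \<union> Pb) = {}" unfolding PPl_def Pa_def Pb_def by auto
  have d2: "Pa \<inter> Pb = {}" unfolding Pa_def Pb_def by auto
  have fa: "finite Pa" "finite Pb" unfolding Pa_def Pb_def by auto
  have inja: "inj_on (\<lambda>i. (i,l)) {..<l}" and injb: "inj_on (\<lambda>j. (l,j)) {l<..<s}"
    by (auto simp: inj_on_def)
  have pa: "(\<Prod>(i,j)\<in>Pa. (w i - w j)) = (-1)^l * (\<Prod>i<l. (w l - w i))"
  proof -
    have "(\<Prod>(i,j)\<in>Pa. (w i - w j)) = (\<Prod>i<l. (w i - w l))"
      unfolding Pa_def by (subst prod.reindex[OF inja]) simp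
    also have "\<dots> = (\<Prod>i<l. (-1) * (w l - w i))" by (rule prod.cong) auto
    also have "\<dots> = (-1)^l * (\<Prod>i<l. (w l - w i))" by (simp only: prod.distrib prod_constant card_lessThan)
    finally show ?thesis .
  qed
  have pb: "(\<Prod>(i,j)\<in>Pb. (w i - w j)) = (\<Prod>j\<in>{l<..<s}. (w l - w j))"
    unfolding Pb_def by (subst prod.reindex[OF injb]) simp
  have sp: "{..<s}-{l} = {..<l} \<union> {l<..<s}" using l by auto
  have "(\<Prod>i\<in>{..<s}-{l}. (w l - w i)) = (\<Prod>i<l. (w l - w i)) * (\<Prod>j\<in>{l<..<s}. (w l - w j))"
    unfolding sp by (rule prod.union_disjoint) auto
  moreover have "V w = Vl l w * ((\<Prod>(i,j)\<in>Pa. (w i - w j)) * (\<Prod>(i,j)\<in>Pb. (w i - w j)))"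
    unfolding V_def Vl_def PPeq
    by (subst prod.union_disjoint[OF finite_PPl _ d1]) (use fa d2 in \<open>auto simp: prod.union_disjoint\<close>)
  ultimately show "V w = (-1) ^ l * Vl l w * (\<Prod>i\<in>{..<s}-{l}. (w l - w i))"
    using pa pb by simp
  have "card PP = card (PPl l) + (card Pa + card Pb)"
    unfolding PPeq using fa d1 d2 finite_PPl by (simp add: card_Un_disjoint)
  moreover have "card Pa = l" "card Pb = s - 1 - l"
    unfolding Pa_def Pb_def using inja injb by (simp_all add: card_image)
  ultimately show "card PP = card (PPl l) + (s - 1)" using l by simp
qed

lemma Rep_V: "Rep (card PP) 0 (\<lambda>t w. V w)"
proof -
  have "Rep (\<Sum>p\<in>PP. 1) (\<Sum>p\<in>PP. 0) (\<lambda>t w. \<Prod>p\<in>PP. (w (fst p) - w (snd p)))"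
    by (rule Rep_prod[OF finite_PP]) (auto simp: PP_def intro!: Rep_diff Rep_var Rep_var')
  then show ?thesis unfolding V_def by (simp add: case_prod_unfold)
qed

lemma Rep_Vl: "Rep (card (PPl l)) 0 (\<lambda>t w. Vl l w)"
proof -
  have "Rep (\<Sum>p\<in>PPl l. 1) (\<Sum>p\<in>PPl l. 0) (\<lambda>t w. \<Prod>p\<in>PPl l. (w (fst p) - w (snd p)))"
    by (rule Rep_prod[OF finite_PPl]) (auto simp: PPl_def intro!: Rep_diff Rep_var Rep_var')
  then show ?thesis unfolding Vl_def by (simp add: case_prod_unfold)
qed

lemma V_nonzero: "inj_on w {..<s} \<Longrightarrow> V w \<noteq> 0"
  unfolding V_def using finite_PP
  by (subst prod_zero_iff) (auto simp: PP_def dest: inj_onD)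

end


context lset
begin

definition Good :: "((nat \<Rightarrow> nat) \<Rightarrow> real) \<Rightarrow> nat \<Rightarrow> nat \<Rightarrow> bool" where
  "Good g e N \<longleftrightarrow> (\<exists>F. (\<forall>l<s. Rep (N * card PP + Y - 2) e (F l)) \<and>
     (\<forall>eta w. Y \<le> eta \<longrightarrow> inj_on w {..<s} \<longrightarrow>
        S g eta w * V w ^ N = (\<Sum>l<s. w l ^ (eta + 2 - Y) * F l (real eta) w)))"

lemma Good_one: "Good (\<lambda>_. 1) 0 1"
proof -
  define F where "F l t w = (-1)^l * w l ^ (s + y l - 3) * (\<Prod>i\<in>{..<s}-{l}. w i ^ y i) * Vl l w"
    for l :: nat and t :: real and w :: "nat \<Rightarrow> real"
  have rep: "Rep (card PP + Y - 2) 0 (F l)" if l: "l < s" for l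
  proof -
    have r1: "Rep 0 0 (\<lambda>t w. (-1::real)^l)" using Rep_const[of "[:(-1)^l:]"] by simp
    have r2: "Rep (s + y l - 3) 0 (\<lambda>t w. w l ^ (s + y l - 3))"
      using Rep_pow[OF Rep_var[OF l], of "s+y l-3"] by simp
    have r3: "Rep (\<Sum>i\<in>{..<s}-{l}. y i) (\<Sum>i\<in>{..<s}-{l}. 0) (\<lambda>t w. \<Prod>i\<in>{..<s}-{l}. w i ^ y i)"
    proof (rule Rep_prod)
      fix i assume "i \<in> {..<s}-{l}"
      then show "Rep (y i) 0 (\<lambda>t w. w i ^ y i)" using Rep_pow[OF Rep_var[of i], of "y i"] by simp
    qed simp
    have r: "Rep (0 + (s + y l - 3) + (\<Sum>i\<in>{..<s}-{l}. y i) + card (PPl l)) (0+0+0+0)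
       (\<lambda>t w. (-1)^l * w l ^ (s + y l - 3) * (\<Prod>i\<in>{..<s}-{l}. w i ^ y i) * Vl l w)"
      by (intro Rep_mult r1 r2 Rep_Vl) (use r3 in simp)
    have "Y = y l + (\<Sum>i\<in>{..<s}-{l}. y i)" unfolding Y_def using l by (simp add: sum.remove)
    moreover have "card PP = card (PPl l) + (s - 1)" using V_split(2)[OF l] .
    moreover have "1 \<le> y l" using y1 l by auto
    ultimately have "0 + (s + y l - 3) + (\<Sum>i\<in>{..<s}-{l}. y i) + card (PPl l) = card PP + Y - 2"
      using s2 by simp
    then show ?thesis using r unfolding F_def by simp
  qed
  have id: "S (\<lambda>_. 1) eta w * V w ^ 1 = (\<Sum>l<s. w l ^ (eta + 2 - Y) * F l (real eta) w)"
    if eta: "Y \<le> eta" and inj: "inj_on w {..<s}" for eta w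
  proof -
    define m where "m = eta - Y"
    define P where "P l = (\<Prod>i\<in>{..<s}-{l}. (w l - w i))" for l
    define Ys where "Ys = (\<Prod>i<s. w i ^ y i)"
    have "Hs {..<s} m w = Gs {..<s} (m + s - 1) w"
      unfolding Gs_def using s2 by (simp add: Suc_diff_le)
    also have "\<dots> = Ds {..<s} (m + s - 1) w" by (rule Ds_eq_Gs[symmetric]) (use inj in auto)
    finally have H: "Hs {..<s} m w = (\<Sum>l<s. w l ^ (m + s - 1) / P l)" by (simp add: Ds_def P_def)
    have "S (\<lambda>_. 1) eta w * V w ^ 1 = Ys * Hs {..<s} m w * V w"
      using S_one[OF eta, of w] by (simp add: m_def Ys_def)
    also have "\<dots> = (\<Sum>l<s. Ys * (w l ^ (m + s - 1) / P l) * V w)"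
      unfolding H by (simp add: sum_distrib_left sum_distrib_right)
    also have "\<dots> = (\<Sum>l<s. w l ^ (eta + 2 - Y) * F l (real eta) w)"
    proof (rule sum.cong)
      fix l assume "l \<in> {..<s}"
      then have l: "l < s" by simp
      have Pne: "P l \<noteq> 0" unfolding P_def by (subst prod_zero_iff) (use inj l in \<open>auto dest: inj_onD\<close>)
      define R where "R = (\<Prod>i\<in>{..<s}-{l}. w i ^ y i)"
      have e1: "Ys * (w l ^ (m + s - 1) / P l) * V w = Ys * w l ^ (m + s - 1) * ((-1)^l * Vl l w)"
        using Pne by (simp add: V_split(1)[OF l] P_def[symmetric] field_simps)
      have e2: "Ys = w l ^ y l * R" unfolding Ys_def R_def using l by (simp add: prod.remove)
      have "1 \<le> y l" using y1 l by auto
      then have ex: "y l + (m + s - 1) = (eta + 2 - Y) + (s + y l - 3)" using s2 eta unfolding m_def by simp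
      have e3: "w l ^ y l * w l ^ (m + s - 1) = w l ^ (eta + 2 - Y) * w l ^ (s + y l - 3)"
        by (simp only: power_add[symmetric] ex)
      have "Ys * (w l ^ (m + s - 1) / P l) * V w = (w l ^ y l * w l ^ (m + s - 1)) * R * ((-1)^l * Vl l w)"
        unfolding e1 unfolding e2 by (simp add: mult_ac)
      also have "\<dots> = w l ^ (eta + 2 - Y) * w l ^ (s + y l - 3) * R * ((-1)^l * Vl l w)"
        unfolding e3 ..
      finally show "Ys * (w l ^ (m + s - 1) / P l) * V w = w l ^ (eta + 2 - Y) * F l (real eta) w"
        by (simp add: F_def R_def mult_ac)
    qed simp
    finally show ?thesis .
  qed
  show ?thesis unfolding Good_def
    by (rule exI[of _ F]) (use rep id in auto)
qed

end


context lset
begin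

lemma Good_pad:
  assumes G: "Good g e N" and e: "e \<le> e'" and N: "N \<le> N'"
  shows "Good g e' N'"
proof -
  obtain F where F: "\<forall>l<s. Rep (N * card PP + Y - 2) e (F l)"
    and Fid: "\<forall>eta w. Y \<le> eta \<longrightarrow> inj_on w {..<s} \<longrightarrow> S g eta w * V w ^ N = (\<Sum>l<s. w l ^ (eta + 2 - Y) * F l (real eta) w)"
    using G unfolding Good_def by blast
  define F2 where "F2 l t w = F l t w * V w ^ (N' - N)" for l t w
  have "Rep (N' * card PP + Y - 2) e' (F2 l)" if l: "l < s" for l
  proof -
    have "Rep ((N * card PP + Y - 2) + (N' - N) * card PP) (e + (N' - N) * 0) (F2 l)"
      unfolding F2_def by (rule Rep_mult) (use F l Rep_pow[OF Rep_V] in auto)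
    moreover have "(N * card PP + Y - 2) + (N' - N) * card PP = N' * card PP + Y - 2"
      using Y2 N by (simp add: diff_mult_distrib)
    ultimately show ?thesis using e by (auto intro: Rep_mono)
  qed
  moreover have "S g eta w * V w ^ N' = (\<Sum>l<s. w l ^ (eta + 2 - Y) * F2 l (real eta) w)"
    if "Y \<le> eta" "inj_on w {..<s}" for eta w
  proof -
    have "S g eta w * V w ^ N' = (S g eta w * V w ^ N) * V w ^ (N' - N)"
      using N by (simp add: power_add[symmetric])
    also have "\<dots> = (\<Sum>l<s. w l ^ (eta + 2 - Y) * F l (real eta) w) * V w ^ (N' - N)"
      using Fid that by simp
    also have "\<dots> = (\<Sum>l<s. w l ^ (eta + 2 - Y) * F2 l (real eta) w)"
      by (simp add: F2_def sum_distrib_right mult.assoc)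
    finally show ?thesis .
  qed
  ultimately show ?thesis unfolding Good_def by blast
qed

lemma Good_zero: "Good (\<lambda>_. 0) e N"
  unfolding Good_def by (rule exI[of _ "\<lambda>l t w. 0"]) (auto simp: S_def Rep_zero)

lemma Good_add:
  assumes "Good g e N" "Good h e N"
  shows "Good (\<lambda>x. g x + h x) e N"
proof -
  obtain F where F: "\<forall>l<s. Rep (N * card PP + Y - 2) e (F l)"
    and Fid: "\<forall>eta w. Y \<le> eta \<longrightarrow> inj_on w {..<s} \<longrightarrow> S g eta w * V w ^ N = (\<Sum>l<s. w l ^ (eta + 2 - Y) * F l (real eta) w)"
    using assms(1) unfolding Good_def by blast
  obtain H where H: "\<forall>l<s. Rep (N * card PP + Y - 2) e (H l)"
    and Hid: "\<forall>eta w. Y \<le> eta \<longrightarrow> inj_on w {..<s} \<longrightarrow> S h eta w * V w ^ N = (\<Sum>l<s. w l ^ (eta + 2 - Y) * H l (real eta) w)"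
    using assms(2) unfolding Good_def by blast
  have S_add: "S (\<lambda>x. g x + h x) eta w = S g eta w + S h eta w" for eta w
    by (simp add: S_def sum.distrib distrib_right)
  show ?thesis unfolding Good_def
    by (rule exI[of _ "\<lambda>l t w. F l t w + H l t w"])
       (use F H Fid Hid in \<open>auto simp: S_add distrib_right distrib_left sum.distrib intro: Rep_add\<close>)
qed

lemma Good_scale:
  assumes "Good g e N"
  shows "Good (\<lambda>x. c * g x) e N"
proof -
  obtain F where F: "\<forall>l<s. Rep (N * card PP + Y - 2) e (F l)"
    and Fid: "\<forall>eta w. Y \<le> eta \<longrightarrow> inj_on w {..<s} \<longrightarrow> S g eta w * V w ^ N = (\<Sum>l<s. w l ^ (eta + 2 - Y) * F l (real eta) w)"
    using assms(1) unfolding Good_def by blast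
  have S_sc: "S (\<lambda>x. c * g x) eta w = c * S g eta w" for eta w
    by (simp add: S_def sum_distrib_left mult_ac)
  show ?thesis unfolding Good_def
    by (rule exI[of _ "\<lambda>l t w. c * F l t w"])
       (use F Fid in \<open>auto simp: S_sc sum_distrib_left mult_ac intro: Rep_scale\<close>)
qed

lemma Good_sum:
  "finite I \<Longrightarrow> (\<And>i. i \<in> I \<Longrightarrow> Good (g i) e N) \<Longrightarrow> Good (\<lambda>x. \<Sum>i\<in>I. g i x) e N"
proof (induction I rule: finite_induct)
  case empty then show ?case by (simp add: Good_zero)
next
  case (insert a I)
  then show ?case using Good_add[of "g a" e N "\<lambda>x. \<Sum>i\<in>I. g i x"] by simp
qed

lemma S_deriv:
  assumes k: "k < s"
  shows "((\<lambda>u. S g eta (w(k:=u))) has_real_derivative (\<Sum>x\<in>Cset eta. g x * Dp {..<s} x w k)) (at (w k))"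
    and "w k * (\<Sum>x\<in>Cset eta. g x * Dp {..<s} x w k) = S (\<lambda>x. real (x k) * g x) eta w"
proof -
  show "((\<lambda>u. S g eta (w(k:=u))) has_real_derivative (\<Sum>x\<in>Cset eta. g x * Dp {..<s} x w k)) (at (w k))"
    unfolding S_def
    by (rule DERIV_sum, rule DERIV_cmult, rule prod_pow_deriv(1)) (use k in auto)
  show "w k * (\<Sum>x\<in>Cset eta. g x * Dp {..<s} x w k) = S (\<lambda>x. real (x k) * g x) eta w"
    unfolding S_def sum_distrib_left
  proof (rule sum.cong)
    fix x
    have "w k * Dp {..<s} x w k = real (x k) * (\<Prod>i<s. w i ^ x i)" by (rule prod_pow_deriv(2)) (use k in auto)
    then show "w k * (g x * Dp {..<s} x w k) = real (x k) * g x * (\<Prod>i<s. w i ^ x i)"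
      by (metis mult.assoc mult.left_commute)
  qed simp
qed

lemma pow_deriv:
  shows "((\<lambda>u. (w(k:=u)) l ^ A) has_real_derivative (if l = k then real A * w k ^ (A - 1) else 0)) (at (w k))"
    and "w k * (if l = k then real A * w k ^ (A - 1) else 0) = (if l = k then real A else 0) * w l ^ A"
proof -
  show "((\<lambda>u. (w(k:=u)) l ^ A) has_real_derivative (if l = k then real A * w k ^ (A - 1) else 0)) (at (w k))"
  proof (cases "l = k")
    case True
    then show ?thesis using DERIV_pow[of A "w k" UNIV] by simp
  next
    case False
    then show ?thesis by simp
  qed
  show "w k * (if l = k then real A * w k ^ (A - 1) else 0) = (if l = k then real A else 0) * w l ^ A"
    by (cases A) auto
qed

lemma inj_upd:
  assumes inj: "inj_on w {..<s}" and u: "u \<notin> w ` ({..<s} - {k})"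
  shows "inj_on (w(k:=u)) {..<s}"
  unfolding inj_on_def
proof (intro ballI impI)
  fix i j assume i: "i \<in> {..<s}" and j: "j \<in> {..<s}" and eq: "(w(k:=u)) i = (w(k:=u)) j"
  show "i = j"
  proof (cases "i = k"; cases "j = k")
    assume "i = k" "j \<noteq> k" then show "i = j" using eq u j by auto
  next
    assume "i \<noteq> k" "j = k" then show "i = j" using eq u i by (auto simp: image_iff)
  next
    assume "i \<noteq> k" "j \<noteq> k" then show "i = j" using eq inj i j by (auto dest: inj_onD)
  qed simp
qed

end


context lset
begin

lemma Good_deriv:
  assumes k: "k < s" and G: "Good g e N"
  shows "Good (\<lambda>x. real (x k) * g x) (Suc e) (Suc N)"
proof -
  define d where "d = N * card PP + Y - 2"
  obtain F where F: "\<forall>l<s. Rep d e (F l)"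
    and Fid: "\<forall>eta w. Y \<le> eta \<longrightarrow> inj_on w {..<s} \<longrightarrow> S g eta w * V w ^ N = (\<Sum>l<s. w l ^ (eta + 2 - Y) * F l (real eta) w)"
    using G unfolding Good_def d_def by blast
  have "\<forall>l. \<exists>\<Psi> \<Phi>'. l < s \<longrightarrow> (Rep d e \<Psi> \<and> (\<forall>t w. ((\<lambda>u. F l t (w(k:=u))) has_real_derivative \<Phi>' t w) (at (w k))
          \<and> w k * \<Phi>' t w = \<Psi> t w))"
    using Rep_deriv F by blast
  then obtain Psi F' where PF: "\<And>l. l < s \<Longrightarrow> Rep d e (Psi l) \<and> (\<forall>t w. ((\<lambda>u. F l t (w(k:=u))) has_real_derivative F' l t w) (at (w k))
          \<and> w k * F' l t w = Psi l t w)"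
    by metis
  obtain EV V' where EV: "Rep (card PP) 0 EV"
    and EV2: "\<forall>t w. ((\<lambda>u. V (w(k:=u))) has_real_derivative V' t w) (at (w k)) \<and> w k * V' t w = EV t w"
    using Rep_deriv[OF Rep_V, of k] by auto
  define cp where "cp l = (if l = k then [:2 - real Y, 1:] else 0)" for l
  define Fn where "Fn l t w = poly (cp l) t * F l t w * V w + Psi l t w * V w - real N * (F l t w * EV t w)" for l t w
  have rep: "Rep (Suc N * card PP + Y - 2) (Suc e) (Fn l)" if l: "l < s" for l
  proof -
    have c: "Rep 0 1 (\<lambda>t w. poly (cp l) t)"
      using Rep_const[of "cp l"] by (auto simp: cp_def intro: Rep_mono)
    have a: "Rep (0 + (d + card PP)) (1 + (e + 0)) (\<lambda>t w. poly (cp l) t * (F l t w * V w))"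
      by (intro Rep_mult c) (use F l Rep_V in auto)
    have b: "Rep (d + card PP) (e + 0) (\<lambda>t w. Psi l t w * V w)"
      by (intro Rep_mult) (use PF l Rep_V in auto)
    have c2: "Rep (d + card PP) (e + 0) (\<lambda>t w. real N * (F l t w * EV t w))"
      by (intro Rep_scale Rep_mult) (use F l EV in auto)
    have "Rep (d + card PP) (Suc e) (\<lambda>t w. poly (cp l) t * (F l t w * V w) + Psi l t w * V w - real N * (F l t w * EV t w))"
      by (intro Rep_diff Rep_add) (use a b c2 in \<open>auto intro: Rep_mono\<close>)
    moreover have "d + card PP = Suc N * card PP + Y - 2" unfolding d_def using Y2 by simp
    ultimately show ?thesis unfolding Fn_def by (simp add: mult.assoc)
  qed
  have id: "S (\<lambda>x. real (x k) * g x) eta w * V w ^ Suc N = (\<Sum>l<s. w l ^ (eta + 2 - Y) * Fn l (real eta) w)"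
    if eta: "Y \<le> eta" and inj: "inj_on w {..<s}" for eta w
  proof -
    define A where "A = eta + 2 - Y"
    define t where "t = real eta"
    define U where "U = - (w ` ({..<s} - {k}))"
    have openU: "open U" unfolding U_def by (intro open_Compl finite_imp_closed) auto
    have wkU: "w k \<in> U" unfolding U_def using inj k by (auto dest: inj_onD)
    define S' where "S' = (\<Sum>x\<in>Cset eta. g x * Dp {..<s} x w k)"
    define Dl where "Dl l = (if l = k then real A * w k ^ (A - 1) else 0)" for l
    define DL where "DL = S' * V w ^ N + real N * (V' t w * V w ^ (N - Suc 0)) * S g eta w"
    define DR where "DR = (\<Sum>l<s. Dl l * F l t w + F' l t w * w l ^ A)"
    have dV: "((\<lambda>u. V (w(k:=u))) has_real_derivative V' t w) (at (w k))" using EV2 by blast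
    have hL: "((\<lambda>u. S g eta (w(k:=u)) * V (w(k:=u)) ^ N) has_real_derivative DL) (at (w k))"
      using DERIV_mult[OF S_deriv(1)[OF k, where g=g and eta=eta and w=w] DERIV_power[OF dV, of N]]
      unfolding DL_def S'_def by simp
    have hR: "((\<lambda>u. \<Sum>l<s. (w(k:=u)) l ^ A * F l t (w(k:=u))) has_real_derivative DR) (at (w k))"
      unfolding DR_def
    proof (rule DERIV_sum)
      fix l assume "l \<in> {..<s}"
      then have l: "l < s" by simp
      have dF: "((\<lambda>u. F l t (w(k:=u))) has_real_derivative F' l t w) (at (w k))" using PF[OF l] by blast
      show "((\<lambda>u. (w(k:=u)) l ^ A * F l t (w(k:=u))) has_real_derivative Dl l * F l t w + F' l t w * w l ^ A) (at (w k))"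
        using DERIV_mult[OF pow_deriv(1)[of w k l A] dF]
        unfolding Dl_def by simp
    qed
    have eqU: "S g eta (w(k:=u)) * V (w(k:=u)) ^ N = (\<Sum>l<s. (w(k:=u)) l ^ A * F l t (w(k:=u)))"
      if "u \<in> U" for u
      using Fid eta inj_upd[OF inj, of u k] that unfolding U_def A_def t_def by auto
    have "DL = DR"
      using DERIV_unique[OF hL has_field_derivative_transform_within_open[OF hR openU wkU eqU[symmetric]]] .
    then have key: "w k * V w * DL = w k * V w * DR" by simp
    have NV: "real N * (V w ^ (N - Suc 0) * V w) = real N * V w ^ N" by (cases N) auto
    have L: "w k * V w * DL = S (\<lambda>x. real (x k) * g x) eta w * V w ^ Suc N + real N * EV t w * (S g eta w * V w ^ N)"
    proof -
      have "w k * V w * DL = (w k * S') * V w ^ Suc N + (w k * V' t w) * (real N * (V w ^ (N - Suc 0) * V w)) * S g eta w"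
        unfolding DL_def by (simp add: algebra_simps)
      also have "\<dots> = S (\<lambda>x. real (x k) * g x) eta w * V w ^ Suc N + real N * EV t w * (S g eta w * V w ^ N)"
        unfolding NV using S_deriv(2)[OF k, where g=g and eta=eta and w=w] EV2 unfolding S'_def by (simp add: mult_ac)
      finally show ?thesis .
    qed
    have R: "w k * V w * DR = (\<Sum>l<s. poly (cp l) t * w l ^ A * F l t w * V w + w l ^ A * Psi l t w * V w)"
      unfolding DR_def sum_distrib_left
    proof (rule sum.cong)
      fix l assume "l \<in> {..<s}"
      then have l: "l < s" by simp
      have a1: "w k * Dl l = (if l = k then real A else 0) * w l ^ A" unfolding Dl_def by (rule pow_deriv(2))
      have a2: "w k * F' l t w = Psi l t w" using PF[OF l] by blast
      have a3: "(if l = k then real A else 0) = poly (cp l) t"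
        unfolding cp_def t_def A_def using eta by auto
      have "w k * V w * (Dl l * F l t w + F' l t w * w l ^ A) = (w k * Dl l) * F l t w * V w + w l ^ A * (w k * F' l t w) * V w"
        by (simp add: algebra_simps)
      then show "w k * V w * (Dl l * F l t w + F' l t w * w l ^ A) = poly (cp l) t * w l ^ A * F l t w * V w + w l ^ A * Psi l t w * V w"
        unfolding a1 a2 a3 by simp
    qed simp
    have SV: "S g eta w * V w ^ N = (\<Sum>l<s. w l ^ A * F l t w)" using Fid eta inj unfolding A_def t_def by auto
    have "S (\<lambda>x. real (x k) * g x) eta w * V w ^ Suc N
        = (\<Sum>l<s. poly (cp l) t * w l ^ A * F l t w * V w + w l ^ A * Psi l t w * V w) - real N * EV t w * (\<Sum>l<s. w l ^ A * F l t w)"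
      using key L R SV by simp
    also have "\<dots> = (\<Sum>l<s. w l ^ A * Fn l t w)"
      unfolding sum_distrib_left sum_subtractf[symmetric] Fn_def
      by (rule sum.cong) (simp_all add: algebra_simps)
    finally show ?thesis unfolding A_def t_def .
  qed
  show ?thesis unfolding Good_def
    by (rule exI[of _ Fn]) (use rep id in auto)
qed

end


lemma Suc_le_two_pow: "Suc q \<le> 2 ^ q"
proof (induction q)
  case 0 then show ?case by simp
next
  case (Suc q)
  have "1 \<le> (2::nat) ^ q" by simp
  then show ?case using Suc by simp
qed

context lset
begin

lemma Good_monomial:
  "(\<Sum>i<s. a i) = n \<Longrightarrow> Good (\<lambda>x. \<Prod>i<s. real (x i) ^ a i) n (Suc n)"
proof (induction n arbitrary: a)
  case 0
  then have "\<forall>i<s. a i = 0" by simp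
  then have "(\<lambda>x. \<Prod>i<s. real (x i) ^ a i) = (\<lambda>_. 1)" by (auto simp: fun_eq_iff)
  then show ?case using Good_one by simp
next
  case (Suc n)
  obtain k where k: "k < s" "a k \<noteq> 0"
    using Suc.prems by (metis (mono_tags, lifting) lessThan_iff nat.simps(3) sum.neutral)
  define a' where "a' = a(k := a k - 1)"
  have "(\<Sum>i<s. a' i) = (a k - 1) + (\<Sum>i\<in>{..<s}-{k}. a i)"
    unfolding a'_def by (rule sum_upd) (use k in auto)
  moreover have "(\<Sum>i<s. a i) = a k + (\<Sum>i\<in>{..<s}-{k}. a i)" using k by (simp add: sum.remove)
  ultimately have "(\<Sum>i<s. a' i) = n" using Suc.prems k by simp
  then have "Good (\<lambda>x. \<Prod>i<s. real (x i) ^ a' i) n (Suc n)" by (rule Suc.IH)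
  from Good_deriv[OF k(1) this]
  have g: "Good (\<lambda>x. real (x k) * (\<Prod>i<s. real (x i) ^ a' i)) (Suc n) (Suc (Suc n))" .
  have "real (x k) * (\<Prod>i<s. real (x i) ^ a' i) = (\<Prod>i<s. real (x i) ^ a i)" for x
  proof -
    have pu: "(\<Prod>i<s. real (x i) ^ a' i) = real (x k) ^ (a k - 1) * (\<Prod>i\<in>{..<s}-{k}. real (x i) ^ a i)"
      unfolding a'_def by (rule prod_upd) (use k in auto)
    have "real (x k) * (\<Prod>i<s. real (x i) ^ a' i) = real (x k) * (real (x k) ^ (a k - 1) * (\<Prod>i\<in>{..<s}-{k}. real (x i) ^ a i))"
      unfolding pu ..
    also have "\<dots> = real (x k) ^ a k * (\<Prod>i\<in>{..<s}-{k}. real (x i) ^ a i)"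
      using k by (cases "a k") auto
    also have "\<dots> = (\<Prod>i<s. real (x i) ^ a i)" using k by (simp add: prod.remove)
    finally show ?thesis .
  qed
  then show ?case using g by simp
qed

lemma Good_poly:
  assumes vb: "vars_below p s" and td: "total_degree p = q"
  shows "Good (\<lambda>x. mpoly_eval p (\<lambda>i. real (x i))) q (2 ^ q)"
proof -
  have eq: "(\<lambda>x. mpoly_eval p (\<lambda>i. real (x i)))
      = (\<lambda>x. \<Sum>\<alpha>\<in>Poly_Mapping.keys p. Poly_Mapping.lookup p \<alpha> * (\<Prod>i<s. real (x i) ^ Poly_Mapping.lookup \<alpha> i))"
  proof (rule ext)
    fix x
    show "mpoly_eval p (\<lambda>i. real (x i)) = (\<Sum>\<alpha>\<in>Poly_Mapping.keys p. Poly_Mapping.lookup p \<alpha> * (\<Prod>i<s. real (x i) ^ Poly_Mapping.lookup \<alpha> i))"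
      unfolding mpoly_eval_def
      by (rule sum.cong[OF refl], subst mono_eval_superset[of "{..<s}"]) (use vb in \<open>auto simp: vars_below_def\<close>)
  qed
  have "Good (\<lambda>x. \<Sum>\<alpha>\<in>Poly_Mapping.keys p. Poly_Mapping.lookup p \<alpha> * (\<Prod>i<s. real (x i) ^ Poly_Mapping.lookup \<alpha> i)) q (2 ^ q)"
  proof (rule Good_sum[OF finite_keys])
    fix \<alpha> assume \<alpha>: "\<alpha> \<in> Poly_Mapping.keys p"
    have md: "mono_deg \<alpha> = (\<Sum>i<s. Poly_Mapping.lookup \<alpha> i)"
      by (rule mono_deg_superset) (use vb \<alpha> in \<open>auto simp: vars_below_def\<close>)
    have le: "mono_deg \<alpha> \<le> q"
      unfolding td[symmetric] total_degree_def using \<alpha> by (intro Max_ge) auto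
    have "Good (\<lambda>x. \<Prod>i<s. real (x i) ^ Poly_Mapping.lookup \<alpha> i) (mono_deg \<alpha>) (Suc (mono_deg \<alpha>))"
      by (rule Good_monomial) (simp add: md)
    then have "Good (\<lambda>x. \<Prod>i<s. real (x i) ^ Poly_Mapping.lookup \<alpha> i) q (2 ^ q)"
      by (rule Good_pad) (use le Suc_le_two_pow[of q] in auto)
    then show "Good (\<lambda>x. Poly_Mapping.lookup p \<alpha> * (\<Prod>i<s. real (x i) ^ Poly_Mapping.lookup \<alpha> i)) q (2 ^ q)"
      by (rule Good_scale)
  qed
  then show ?thesis unfolding eq .
qed

lemma Rep_to_poly:
  assumes "Rep d e \<Phi>"
  shows "\<exists>G. vars_below G s \<and> homogeneous_of G d \<and> (\<forall>a\<in>Poly_Mapping.keys G. degree (Poly_Mapping.lookup G a) \<le> e)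
     \<and> (\<forall>t w. \<Phi> t w = eta_mpoly_eval G t w)"
proof -
  obtain L where L: "\<forall>(c,a)\<in>set L. Poly_Mapping.keys a \<subseteq> {..<s} \<and> mono_deg a = d \<and> degree c \<le> e"
    "\<forall>t w. \<Phi> t w = (\<Sum>(c,a)\<leftarrow>L. poly c t * mono_eval a w)"
    using assms unfolding Rep_def by blast
  have K: "Poly_Mapping.keys (collect L) \<subseteq> snd ` set L" by (rule collect_keys)
  show ?thesis
  proof (intro exI[of _ "collect L"] conjI)
    show "vars_below (collect L) s" unfolding vars_below_def using K L(1) by fastforce
    show "homogeneous_of (collect L) d" unfolding homogeneous_of_def using K L(1) by fastforce
    show "\<forall>a\<in>Poly_Mapping.keys (collect L). degree (Poly_Mapping.lookup (collect L) a) \<le> e"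
      using collect_degree L(1) by (auto simp: case_prod_beta)
    show "\<forall>t w. \<Phi> t w = eta_mpoly_eval (collect L) t w" using L(2) by (simp add: collect_eval)
  qed
qed

end

theorem lemma3p6:
  fixes s q :: nat and y :: "nat \<Rightarrow> nat" and p :: "(nat \<Rightarrow>\<^sub>0 nat) \<Rightarrow>\<^sub>0 real"
  assumes "s \<ge> 2"
    and "\<forall>i<s. y i \<ge> 1"
    and "vars_below p s"
    and "total_degree p = q"
  shows "\<exists>f :: nat \<Rightarrow> ((nat \<Rightarrow>\<^sub>0 nat) \<Rightarrow>\<^sub>0 real poly).
     (\<forall>l<s. vars_below (f l) s
            \<and> homogeneous_of (f l) (2 ^ q * (s choose 2) + (\<Sum>i<s. y i) - 2)
            \<and> (\<forall>\<alpha>\<in>Poly_Mapping.keys (f l). degree (Poly_Mapping.lookup (f l) \<alpha>) \<le> q))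
   \<and> (\<forall>(eta::nat) (w::nat \<Rightarrow> real).
        eta \<ge> (\<Sum>i<s. y i) \<longrightarrow> inj_on w {..<s} \<longrightarrow>
        (\<Sum>x\<in>{x :: nat \<Rightarrow> nat. (\<forall>i<s. y i \<le> x i) \<and> (\<forall>i\<ge>s. x i = 0) \<and> (\<Sum>i<s. x i) = eta}.
            mpoly_eval p (\<lambda>i. real (x i)) * (\<Prod>i<s. w i ^ x i))
        = (\<Sum>l<s. w l ^ (eta + 2 - (\<Sum>i<s. y i)) * eta_mpoly_eval (f l) (real eta) w)
          / (\<Prod>(i, j)\<in>{(i, j). i < j \<and> j < s}. (w i - w j)) ^ (2 ^ q))"
proof -
  interpret lset s y using assms(1,2) by unfold_locales auto
  have cPP: "card PP = s choose 2" unfolding PP_def by (rule card_pairs)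
  obtain F where F: "\<forall>l<s. Rep (2 ^ q * card PP + Y - 2) q (F l)"
    and Fid: "\<forall>eta w. Y \<le> eta \<longrightarrow> inj_on w {..<s} \<longrightarrow>
       S (\<lambda>x. mpoly_eval p (\<lambda>i. real (x i))) eta w * V w ^ (2 ^ q) = (\<Sum>l<s. w l ^ (eta + 2 - Y) * F l (real eta) w)"
    using Good_poly[OF assms(3,4)] unfolding Good_def by blast
  have "\<forall>l. \<exists>G. l < s \<longrightarrow> vars_below G s \<and> homogeneous_of G (2 ^ q * card PP + Y - 2)
     \<and> (\<forall>a\<in>Poly_Mapping.keys G. degree (Poly_Mapping.lookup G a) \<le> q) \<and> (\<forall>t w. F l t w = eta_mpoly_eval G t w)"
    using Rep_to_poly F by blast
  then obtain f where f: "\<And>l. l < s \<Longrightarrow> vars_below (f l) s \<and> homogeneous_of (f l) (2 ^ q * card PP + Y - 2)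
     \<and> (\<forall>a\<in>Poly_Mapping.keys (f l). degree (Poly_Mapping.lookup (f l) a) \<le> q) \<and> (\<forall>t w. F l t w = eta_mpoly_eval (f l) t w)"
    by metis
  show ?thesis
  proof (rule exI[of _ f], rule conjI)
    show "\<forall>l<s. vars_below (f l) s \<and> homogeneous_of (f l) (2 ^ q * (s choose 2) + (\<Sum>i<s. y i) - 2)
            \<and> (\<forall>\<alpha>\<in>Poly_Mapping.keys (f l). degree (Poly_Mapping.lookup (f l) \<alpha>) \<le> q)"
      using f by (simp add: cPP Y_def)
  next
    show "\<forall>(eta::nat) (w::nat \<Rightarrow> real).
        eta \<ge> (\<Sum>i<s. y i) \<longrightarrow> inj_on w {..<s} \<longrightarrow>
        (\<Sum>x\<in>{x :: nat \<Rightarrow> nat. (\<forall>i<s. y i \<le> x i) \<and> (\<forall>i\<ge>s. x i = 0) \<and> (\<Sum>i<s. x i) = eta}.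
            mpoly_eval p (\<lambda>i. real (x i)) * (\<Prod>i<s. w i ^ x i))
        = (\<Sum>l<s. w l ^ (eta + 2 - (\<Sum>i<s. y i)) * eta_mpoly_eval (f l) (real eta) w)
          / (\<Prod>(i, j)\<in>{(i, j). i < j \<and> j < s}. (w i - w j)) ^ (2 ^ q)"
    proof (intro allI impI)
    fix eta :: nat and w :: "nat \<Rightarrow> real" assume eta: "(\<Sum>i<s. y i) \<le> eta" and inj: "inj_on w {..<s}"
    have Vne: "V w ^ (2 ^ q) \<noteq> 0" using V_nonzero[OF inj] by simp
    have "S (\<lambda>x. mpoly_eval p (\<lambda>i. real (x i))) eta w * V w ^ (2 ^ q) = (\<Sum>l<s. w l ^ (eta + 2 - Y) * eta_mpoly_eval (f l) (real eta) w)"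
      using Fid eta inj f unfolding Y_def by simp
    then have "S (\<lambda>x. mpoly_eval p (\<lambda>i. real (x i))) eta w = (\<Sum>l<s. w l ^ (eta + 2 - Y) * eta_mpoly_eval (f l) (real eta) w) / V w ^ (2 ^ q)"
      using Vne by (simp add: field_simps)
    then show "(\<Sum>x\<in>{x :: nat \<Rightarrow> nat. (\<forall>i<s. y i \<le> x i) \<and> (\<forall>i\<ge>s. x i = 0) \<and> (\<Sum>i<s. x i) = eta}.
            mpoly_eval p (\<lambda>i. real (x i)) * (\<Prod>i<s. w i ^ x i))
        = (\<Sum>l<s. w l ^ (eta + 2 - (\<Sum>i<s. y i)) * eta_mpoly_eval (f l) (real eta) w)
          / (\<Prod>(i, j)\<in>{(i, j). i < j \<and> j < s}. (w i - w j)) ^ (2 ^ q)"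
      unfolding S_def Cset_def V_def PP_def Y_def .
  qed
  qed
qed

end
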